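(* Let $C\subset\mathbb{R}^n$ be a nonempty compact path-wise connected set and let $f:C\to\mathbb{R}$ be a continuous function satisfying the Lipschitz condition, with Lipschitz constant $$M_0=\sup\Big\{\frac{|f(y)-f(x)|}{|y-x|}\ :\ x,y\in C,\ x\neq y\Big\}<\infty .$$ Let $v=\min_{x\in C}f(x)$ be the global minimum value of $f$ on $C$. Let $C=C_1\supset C_2\supset\cdots$ be the sequence of sets produced by the granular sieving (GrS) procedure with constant $M_0$ (described in the context), where the maximal diameters $\delta_k$ of the partition pieces satisfy $\delta_k\to 0$ as $k\to\infty$. Then $$\tilde C:=\bigcap_{k=1}^{\infty}C_k\neq\emptyset\qquad\text{and}\qquad f(\tilde C)=\{v\},$$ where $f(A)=\{f(a): a\in A\}$ for $A\subset C$.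
   Context: GrS procedure with constant $M>0$ (here $M=M_0$): set $C_1=C$. Given a compact set $C_k\subset C$, choose a finite partition $\mathbb{N}_k=\{C^{(k)}_l: l=1,\dots,l_k\}$ of $C_k$, i.e. $C_k=\bigcup_{l=1}^{l_k}C^{(k)}_l$, such that: each $C^{(k)}_l$ is compact (boundaries of different pieces may overlap); the partitions become finer, in the sense that each piece $C^{(k+1)}_{l'}$ of $\mathbb{N}_{k+1}$ is either entirely contained in a piece $C^{(k)}_l$ of $\mathbb{N}_k$ or has empty intersection with the interior of $C^{(k)}_l$; and in each piece a representative point ("center") $x^{(k)}_l\in C^{(k)}_l$ is chosen. Let $\delta_k$ be the maximal diameter of the pieces $C^{(k)}_l$, $l=1,\dots,l_k$ (diameter = maximal distance between two points of the set). Put $v_k=\min\{f(x^{(k)}_l): l=1,\dots,l_k\}$. A piece $C^{(k)}_l$ is called good if $f(x^{(k)}_l)\le v_k+\delta_k M$ and bad if $f(x^{(k)}_l)> v_k+\delta_k M$. Define $C_{k+1}$ to be the union of all good pieces of $\mathbb{N}_k$, and continue inductively. *)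

theory Defs
  imports "HOL-Analysis.Analysis"
begin

definition lip_ratios :: "('a::metric_space \<Rightarrow> real) \<Rightarrow> 'a set \<Rightarrow> real set" where
  "lip_ratios f C = {\<bar>f y - f x\<bar> / dist y x | x y. x \<in> C \<and> y \<in> C \<and> x \<noteq> y}"

text \<open>Steps are indexed by k \<ge> 1.  Cs k is the compact set C_k, L k = l_k is the number of
  pieces, P k l (1 \<le> l \<le> L k) are the pieces C^{(k)}_l, c k l their centers x^{(k)}_l,
  and \<delta> k the maximal diameter of the pieces of the k-th partition.\<close>
definition GrS ::
  "'a::euclidean_space set \<Rightarrow> ('a \<Rightarrow> real) \<Rightarrow> real \<Rightarrow> (nat \<Rightarrow> 'a set) \<Rightarrow> (nat \<Rightarrow> nat)
    \<Rightarrow> (nat \<Rightarrow> nat \<Rightarrow> 'a set) \<Rightarrow> (nat \<Rightarrow> nat \<Rightarrow> 'a) \<Rightarrow> (nat \<Rightarrow> real) \<Rightarrow> bool" where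
  "GrS C f M Cs L P c \<delta> \<longleftrightarrow>
     Cs 1 = C \<and>
     (\<forall>k\<ge>1.
        compact (Cs k) \<and> Cs k \<subseteq> C \<and>
        Cs k = (\<Union>l\<in>{1..L k}. P k l) \<and>
        (\<forall>l\<in>{1..L k}. compact (P k l) \<and> c k l \<in> P k l) \<and>
        (\<forall>l'\<in>{1..L (Suc k)}. \<forall>l\<in>{1..L k}.
            P (Suc k) l' \<subseteq> P k l \<or> P (Suc k) l' \<inter> interior (P k l) = {}) \<and>
        \<delta> k = Max ((\<lambda>l. diameter (P k l)) ` {1..L k}) \<and>
        Cs (Suc k) = (\<Union>l\<in>{l\<in>{1..L k}.
            f (c k l) \<le> Min ((\<lambda>l. f (c k l)) ` {1..L k}) + \<delta> k * M}. P k l))"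

end

theory Submission
  imports Defs
begin

theorem theorem1:
  fixes C :: "(real ^ 'n) set" and f :: "real ^ 'n \<Rightarrow> real"
    and Cs :: "nat \<Rightarrow> (real ^ 'n) set" and L :: "nat \<Rightarrow> nat"
    and P :: "nat \<Rightarrow> nat \<Rightarrow> (real ^ 'n) set" and c :: "nat \<Rightarrow> nat \<Rightarrow> real ^ 'n"
    and \<delta> :: "nat \<Rightarrow> real" and M0 v :: real
  assumes "C \<noteq> {}" and "compact C" and "path_connected C"
    and "continuous_on C f"
    and "bdd_above (lip_ratios f C)"
    and "M0 = Sup (lip_ratios f C)"
    and "v = (INF x\<in>C. f x)"
    and "GrS C f M0 Cs L P c \<delta>"
    and "\<delta> \<longlonglongrightarrow> 0"
  shows "(\<Inter>k\<in>{1..}. Cs k) \<noteq> {} \<and> f ` (\<Inter>k\<in>{1..}. Cs k) = {v}"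
proof -
  note G = assms(8)[unfolded GrS_def]
  have G1: "Cs 1 = C" using G by blast
  have Gk: "compact (Cs k) \<and> Cs k \<subseteq> C \<and>
        Cs k = (\<Union>l\<in>{1..L k}. P k l) \<and>
        (\<forall>l\<in>{1..L k}. compact (P k l) \<and> c k l \<in> P k l) \<and>
        \<delta> k = Max ((\<lambda>l. diameter (P k l)) ` {1..L k}) \<and>
        Cs (Suc k) = (\<Union>l\<in>{l\<in>{1..L k}.
            f (c k l) \<le> Min ((\<lambda>l. f (c k l)) ` {1..L k}) + \<delta> k * M0}. P k l)"
    if "k \<ge> 1" for k using G that by blast
  obtain x0 where x0: "x0 \<in> C" "\<And>y. y \<in> C \<Longrightarrow> f x0 \<le> f y"
    using continuous_attains_inf[OF assms(2,1,4)] by blast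
  have v: "v = f x0"
    unfolding assms(7) by (rule cInf_eq_minimum) (use x0 in auto)
  have lip: "\<bar>f y - f x\<bar> \<le> M0 * dist y x" if "x \<in> C" "y \<in> C" "x \<noteq> y" for x y
  proof -
    have "\<bar>f y - f x\<bar> / dist y x \<in> lip_ratios f C"
      unfolding lip_ratios_def using that by blast
    hence "\<bar>f y - f x\<bar> / dist y x \<le> M0"
      using assms(5,6) cSup_upper by blast
    thus ?thesis using that by (simp add: pos_divide_le_eq)
  qed
  have pcl: "\<bar>f y - f (c k l)\<bar> \<le> M0 * \<delta> k"
    if k: "k \<ge> 1" and l: "l \<in> {1..L k}" and y: "y \<in> P k l" for k l y
  proof -
    have cP: "c k l \<in> P k l" "compact (P k l)" using Gk[OF k] l by auto
    have PC: "P k l \<subseteq> C" using Gk[OF k] l by auto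
    have dd: "diameter (P k l) \<le> \<delta> k"
      using Gk[OF k] l by (simp add: Max_ge)
    have dist: "dist y (c k l) \<le> \<delta> k"
      using diameter_bounded_bound[OF compact_imp_bounded[OF cP(2)] y cP(1)] dd by linarith
    show ?thesis
    proof (cases "M0 \<ge> 0")
      case True
      show ?thesis
      proof (cases "y = c k l")
        case True
        have "0 \<le> \<delta> k" using dist by (metis zero_le_dist order_trans)
        thus ?thesis using \<open>M0 \<ge> 0\<close> True by simp
      next
        case False
        have "\<bar>f y - f (c k l)\<bar> \<le> M0 * dist y (c k l)"
          using lip[of "c k l" y] False PC cP y by auto
        also have "\<dots> \<le> M0 * \<delta> k" using dist True by (simp add: mult_left_mono)
        finally show ?thesis .
      qed
    next
      case False
      have single: "a = b" if "a \<in> C" "b \<in> C" for a b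
      proof (rule ccontr)
        assume "a \<noteq> b"
        have "\<bar>f b - f a\<bar> / dist b a \<in> lip_ratios f C"
          unfolding lip_ratios_def using that \<open>a \<noteq> b\<close> by blast
        hence "\<bar>f b - f a\<bar> / dist b a \<le> M0"
          using assms(5,6) cSup_upper by blast
        moreover have "0 \<le> \<bar>f b - f a\<bar> / dist b a" by simp
        ultimately show False using False by linarith
      qed
      have Pk: "P k l' = {x0}" if "l' \<in> {1..L k}" for l'
      proof -
        have "c k l' \<in> P k l'" "P k l' \<subseteq> C" using Gk[OF k] that by auto
        thus ?thesis using single x0(1) by blast
      qed
      have "(\<lambda>l. diameter (P k l)) ` {1..L k} = {0}"
        using Pk l by force
      hence d0: "\<delta> k = 0" using Gk[OF k] by simp
      have "y = c k l" using Pk[OF l] y cP by auto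
      thus ?thesis using d0 by simp
    qed
  qed
  have stepK: "x0 \<in> Cs (Suc k) \<and> (\<forall>x\<in>Cs (Suc k). f x \<le> v + 3 * (M0 * \<delta> k))"
    if k: "k \<ge> 1" and xk: "x0 \<in> Cs k" for k
  proof -
    obtain l0 where l0: "l0 \<in> {1..L k}" "x0 \<in> P k l0" using Gk[OF k] xk by auto
    define m where "m = Min ((\<lambda>l. f (c k l)) ` {1..L k})"
    have fin: "finite ((\<lambda>l. f (c k l)) ` {1..L k})" "(\<lambda>l. f (c k l)) ` {1..L k} \<noteq> {}"
      using l0 by auto
    have m1: "m \<le> f (c k l0)" unfolding m_def using fin l0 by simp
    have m2: "v \<le> m"
    proof -
      obtain l where l: "l \<in> {1..L k}" "m = f (c k l)"
        unfolding m_def using Min_in[OF fin] by auto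
      have "c k l \<in> P k l" "P k l \<subseteq> Cs k" "Cs k \<subseteq> C" using Gk[OF k] l(1) by auto
      hence "c k l \<in> C" by blast
      thus ?thesis using l x0 v by simp
    qed
    have "f (c k l0) \<le> v + M0 * \<delta> k" using pcl[OF k l0] v by linarith
    hence good: "f (c k l0) \<le> m + \<delta> k * M0" using m2 by (simp add: mult.commute)
    have A: "x0 \<in> Cs (Suc k)"
      using Gk[OF k] l0 good unfolding m_def by blast
    have B: "f x \<le> v + 3 * (M0 * \<delta> k)" if x: "x \<in> Cs (Suc k)" for x
    proof -
      obtain l where l: "l \<in> {1..L k}" "f (c k l) \<le> m + \<delta> k * M0" "x \<in> P k l"
        using Gk[OF k] x unfolding m_def by blast
      have "f x \<le> f (c k l) + M0 * \<delta> k" using pcl[OF k l(1) l(3)] by linarith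
      moreover have "f (c k l0) \<le> v + M0 * \<delta> k" using pcl[OF k l0] v by linarith
      ultimately show ?thesis using l(2) m1 by (simp add: mult.commute)
    qed
    show ?thesis using A B by blast
  qed
  have allk: "x0 \<in> Cs k" if "k \<ge> 1" for k
    using that
  proof (induction k rule: dec_induct)
    case base thus ?case using G1 x0 by simp
  next
    case (step k) thus ?case using stepK[of k] by blast
  qed
  have inI: "x0 \<in> (\<Inter>k\<in>{1..}. Cs k)" using allk by auto
  have vals: "f x = v" if x: "x \<in> (\<Inter>k\<in>{1..}. Cs k)" for x
  proof -
    have "x \<in> C" using x G1 by auto
    hence ge: "v \<le> f x" using x0 v by simp
    have lim: "(\<lambda>k. v + 3 * (M0 * \<delta> k)) \<longlonglongrightarrow> v + 3 * (M0 * 0)"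
      by (intro tendsto_intros assms(9))
    have "\<forall>k\<ge>1. f x \<le> v + 3 * (M0 * \<delta> k)"
    proof (intro allI impI)
      fix k :: nat assume k: "k \<ge> 1"
      have "x \<in> Cs (Suc k)" using x by auto
      thus "f x \<le> v + 3 * (M0 * \<delta> k)" using stepK[OF k allk[OF k]] by blast
    qed
    hence "f x \<le> v + 3 * (M0 * 0)"
      using LIMSEQ_le_const[OF lim] by blast
    thus ?thesis using ge by simp
  qed
  show ?thesis using inI vals by auto
qed

end
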